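(* Let $A$ be a commutative ring, $I$ a proper ideal of $A$, and $R = A \propto A/I$ the trivial ring extension of $A$ by $A/I$. Then the $R$-modules $I \propto A/I$ and $0 \propto A/I$ (ideals of $R$) both have infinite projective dimension over $R$.
   Context: All rings are commutative with identity and all modules are unital. For a ring $A$ and an $A$-module $E$, the trivial ring extension $A \propto E$ is the ring with underlying additive group $A \times E$ and multiplication $(a,e)(a',e') = (aa', ae' + a'e)$. For an ideal $I$ of $A$ and an $A$-submodule $E'$ of $E$ with $IE \subseteq E'$, $I \propto E' = \{(a,e) : a \in I, e \in E'\}$ is an ideal of $A \propto E$. *)

theory Defs
  imports "HOL-Algebra.QuotRing" "HOL-Algebra.Module"
begin

text \<open>The A-module A/I is the quotient ring A Quot I; the scalar action of a on a coset e
  is (I +> a) multiplied by e in A Quot I, i.e. a(b + I) = ab + I.\<close>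

definition triv_ext :: "'a ring \<Rightarrow> 'a set \<Rightarrow> ('a \<times> 'a set) ring" where
  "triv_ext A I =
    \<lparr> carrier = carrier A \<times> carrier (A Quot I),
      mult = (\<lambda>(a, e) (a', e').
         (a \<otimes>\<^bsub>A\<^esub> a',
          ((I +>\<^bsub>A\<^esub> a) \<otimes>\<^bsub>A Quot I\<^esub> e') \<oplus>\<^bsub>A Quot I\<^esub> ((I +>\<^bsub>A\<^esub> a') \<otimes>\<^bsub>A Quot I\<^esub> e))),
      one = (\<one>\<^bsub>A\<^esub>, \<zero>\<^bsub>A Quot I\<^esub>),
      zero = (\<zero>\<^bsub>A\<^esub>, \<zero>\<^bsub>A Quot I\<^esub>),
      add = (\<lambda>(a, e) (a', e'). (a \<oplus>\<^bsub>A\<^esub> a', e \<oplus>\<^bsub>A Quot I\<^esub> e')) \<rparr>"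

definition ideal_module :: "('r, 'c) ring_scheme \<Rightarrow> 'r set \<Rightarrow> ('r, 'r) module" where
  "ideal_module R J =
    \<lparr> carrier = J, mult = monoid.mult R, one = \<one>\<^bsub>R\<^esub>,
      zero = \<zero>\<^bsub>R\<^esub>, add = add R, smult = monoid.mult R \<rparr>"

definition module_hom ::
  "('r, 'c) ring_scheme \<Rightarrow> ('r, 'm, 'd) module_scheme \<Rightarrow> ('r, 'n, 'e) module_scheme \<Rightarrow> ('m \<Rightarrow> 'n) \<Rightarrow> bool" where
  "module_hom R M N f \<longleftrightarrow>
     f \<in> carrier M \<rightarrow> carrier N \<and>
     (\<forall>x\<in>carrier M. \<forall>y\<in>carrier M. f (x \<oplus>\<^bsub>M\<^esub> y) = f x \<oplus>\<^bsub>N\<^esub> f y) \<and>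
     (\<forall>r\<in>carrier R. \<forall>x\<in>carrier M. f (r \<odot>\<^bsub>M\<^esub> x) = r \<odot>\<^bsub>N\<^esub> f x)"

definition free_module :: "('r, 'c) ring_scheme \<Rightarrow> 'x set \<Rightarrow> ('r, 'x \<Rightarrow> 'r) module" where
  "free_module R X =
    \<lparr> carrier = {f. f \<in> X \<rightarrow> carrier R \<and> (\<forall>x. x \<notin> X \<longrightarrow> f x = \<zero>\<^bsub>R\<^esub>)
                    \<and> finite {x. f x \<noteq> \<zero>\<^bsub>R\<^esub>}},
      mult = undefined, one = undefined,
      zero = (\<lambda>x. \<zero>\<^bsub>R\<^esub>),
      add = (\<lambda>f g x. f x \<oplus>\<^bsub>R\<^esub> g x),
      smult = (\<lambda>r f x. r \<otimes>\<^bsub>R\<^esub> f x) \<rparr>"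

definition projective :: "('r, 'c) ring_scheme \<Rightarrow> ('r, 'p) module \<Rightarrow> bool" where
  "projective R P \<longleftrightarrow> module R P \<and>
     (\<exists>(X :: 'p set) f g. module_hom R P (free_module R X) f \<and>
        module_hom R (free_module R X) P g \<and> (\<forall>x\<in>carrier P. g (f x) = x))"

text \<open>A projective resolution of length n of M:
  0 \<rightarrow> P n \<rightarrow> ... \<rightarrow> P 1 \<rightarrow> P 0 \<rightarrow> M \<rightarrow> 0, with maps d i : P i \<rightarrow> P (i-1) (i \<ge> 1)
  and augmentation eps : P 0 \<rightarrow> M, exact everywhere.\<close>
definition finite_proj_resolution ::
  "('r, 'c) ring_scheme \<Rightarrow> ('r, 'm) module \<Rightarrow> nat \<Rightarrow> (nat \<Rightarrow> ('r, 'p) module)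
     \<Rightarrow> (nat \<Rightarrow> 'p \<Rightarrow> 'p) \<Rightarrow> ('p \<Rightarrow> 'm) \<Rightarrow> bool" where
  "finite_proj_resolution R M n P d eps \<longleftrightarrow>
     (\<forall>i\<le>n. projective R (P i)) \<and>
     module_hom R (P 0) M eps \<and> eps ` carrier (P 0) = carrier M \<and>
     (\<forall>i. 1 \<le> i \<and> i \<le> n \<longrightarrow> module_hom R (P i) (P (i - 1)) (d i)) \<and>
     (\<forall>i<n. {x \<in> carrier (P i). if i = 0 then eps x = \<zero>\<^bsub>M\<^esub> else d i x = \<zero>\<^bsub>P (i - 1)\<^esub>}
            = d (Suc i) ` carrier (P (Suc i))) \<and>
     {x \<in> carrier (P n). if n = 0 then eps x = \<zero>\<^bsub>M\<^esub> else d n x = \<zero>\<^bsub>P (n - 1)\<^esub>}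
       = {\<zero>\<^bsub>P n\<^esub>}"

end

theory Submission imports Defs begin

lemma te_carrier: "carrier (triv_ext A I) = carrier A \<times> carrier (A Quot I)"
  by (simp add: triv_ext_def)
lemma te_mult: "(a, e) \<otimes>\<^bsub>triv_ext A I\<^esub> (a', e') =
   (a \<otimes>\<^bsub>A\<^esub> a', ((I +>\<^bsub>A\<^esub> a) \<otimes>\<^bsub>A Quot I\<^esub> e') \<oplus>\<^bsub>A Quot I\<^esub> ((I +>\<^bsub>A\<^esub> a') \<otimes>\<^bsub>A Quot I\<^esub> e))"
  by (simp add: triv_ext_def)
lemma te_add: "(a, e) \<oplus>\<^bsub>triv_ext A I\<^esub> (a', e') = (a \<oplus>\<^bsub>A\<^esub> a', e \<oplus>\<^bsub>A Quot I\<^esub> e')"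
  by (simp add: triv_ext_def)
lemma te_zero: "\<zero>\<^bsub>triv_ext A I\<^esub> = (\<zero>\<^bsub>A\<^esub>, I)"
  by (simp add: triv_ext_def FactRing_def)
lemma te_one: "\<one>\<^bsub>triv_ext A I\<^esub> = (\<one>\<^bsub>A\<^esub>, I)"
  by (simp add: triv_ext_def FactRing_def)
lemma quot_zero: "\<zero>\<^bsub>A Quot I\<^esub> = I"
  by (simp add: FactRing_def)

locale TE = ideal I A + cring A for I and A :: "'a ring"
begin

abbreviation "Q \<equiv> A Quot I"
abbreviation "R \<equiv> triv_ext A I"
definition "n0 = (\<zero>\<^bsub>A\<^esub>, I +>\<^bsub>A\<^esub> \<one>\<^bsub>A\<^esub>)"

lemma Qcring: "cring Q" by (rule quotient_is_cring) (rule is_cring)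


lemma h_closed[simp]: "a \<in> carrier A \<Longrightarrow> I +>\<^bsub>A\<^esub> a \<in> carrier Q"
  by (rule ring_hom_closed[OF rcos_ring_hom])
lemma h_mult[simp]: "a \<in> carrier A \<Longrightarrow> b \<in> carrier A \<Longrightarrow> (I +>\<^bsub>A\<^esub> a) \<otimes>\<^bsub>Q\<^esub> (I +>\<^bsub>A\<^esub> b) = I +>\<^bsub>A\<^esub> (a \<otimes>\<^bsub>A\<^esub> b)"
  by (rule ring_hom_mult[OF rcos_ring_hom, symmetric])
lemma h_zero_iff: "(I +>\<^bsub>A\<^esub> a = I) = (a \<in> I)" if "a \<in> carrier A"
proof
  assume "I +>\<^bsub>A\<^esub> a = I" then show "a \<in> I" using a_rcos_self[OF that] by simp
next
  assume "a \<in> I" then show "I +>\<^bsub>A\<^esub> a = I" by (rule a_rcos_const)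
qed
lemma h_in[simp]: "a \<in> I \<Longrightarrow> I +>\<^bsub>A\<^esub> a = I"
  by (simp add: a_rcos_const)
lemma I_closed[simp]: "I \<in> carrier Q"
  proof - interpret Qr: ring Q by (rule quotient_is_ring) show ?thesis using Qr.zero_closed by (simp only: quot_zero) qed
lemma Qz_l[simp]: "I \<otimes>\<^bsub>Q\<^esub> u = I" if "u \<in> carrier Q"
  proof - interpret Qr: ring Q by (rule quotient_is_ring) show ?thesis using Qr.l_null[OF that] by (simp only: quot_zero) qed
lemma Qz_r[simp]: "u \<otimes>\<^bsub>Q\<^esub> I = I" if "u \<in> carrier Q"
  proof - interpret Qr: ring Q by (rule quotient_is_ring) show ?thesis using Qr.r_null[OF that] by (simp only: quot_zero) qed
lemma Qa_l[simp]: "I \<oplus>\<^bsub>Q\<^esub> u = u" if "u \<in> carrier Q"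
  proof - interpret Qr: ring Q by (rule quotient_is_ring) show ?thesis using Qr.l_zero[OF that] by (simp only: quot_zero) qed
lemma Qa_r[simp]: "u \<oplus>\<^bsub>Q\<^esub> I = u" if "u \<in> carrier Q"
  proof - interpret Qr: ring Q by (rule quotient_is_ring) show ?thesis using Qr.r_zero[OF that] by (simp only: quot_zero) qed
lemma h0[simp]: "I +>\<^bsub>A\<^esub> \<zero>\<^bsub>A\<^esub> = I" by simp
lemma h1_ne: "I +>\<^bsub>A\<^esub> \<one>\<^bsub>A\<^esub> \<noteq> I" if "I \<noteq> carrier A"
  using h_zero_iff that one_imp_carrier by auto

lemma n0_carrier[simp]: "n0 \<in> carrier R" by (simp add: n0_def te_carrier)
lemma n0n0: "n0 \<otimes>\<^bsub>R\<^esub> n0 = \<zero>\<^bsub>R\<^esub>"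
  by (simp add: n0_def te_mult te_zero)
lemma n0_mult: "a \<in> carrier A \<Longrightarrow> e \<in> carrier Q \<Longrightarrow> n0 \<otimes>\<^bsub>R\<^esub> (a, e) = (\<zero>\<^bsub>A\<^esub>, I +>\<^bsub>A\<^esub> a)"
  by (simp add: n0_def te_mult)
lemma iI_mult: "i \<in> I \<Longrightarrow> a \<in> carrier A \<Longrightarrow> e \<in> carrier Q \<Longrightarrow> (i, I) \<otimes>\<^bsub>R\<^esub> (a, e) = (i \<otimes>\<^bsub>A\<^esub> a, I)"
  by (simp add: te_mult)
lemma iI_carrier[simp]: "i \<in> I \<Longrightarrow> (i, I) \<in> carrier R"
  by (simp add: te_carrier)

lemma R_cases: obtains a e where "p = (a, e)" by (cases p) auto

lemma R_add_closed[simp]: "p \<in> carrier R \<Longrightarrow> q \<in> carrier R \<Longrightarrow> p \<oplus>\<^bsub>R\<^esub> q \<in> carrier R"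
  by (cases p; cases q) (auto simp: te_carrier te_add intro: cring.cring_simprules[OF Qcring])
lemma R_mult_closed[simp]: "p \<in> carrier R \<Longrightarrow> q \<in> carrier R \<Longrightarrow> p \<otimes>\<^bsub>R\<^esub> q \<in> carrier R"
  by (cases p; cases q) (auto simp: te_carrier te_mult intro!: cring.cring_simprules[OF Qcring])
lemma R_zero_closed[simp]: "\<zero>\<^bsub>R\<^esub> \<in> carrier R"
  by (simp add: te_carrier te_zero)
lemma R_mult_zero_r[simp]: "p \<in> carrier R \<Longrightarrow> p \<otimes>\<^bsub>R\<^esub> \<zero>\<^bsub>R\<^esub> = \<zero>\<^bsub>R\<^esub>"
  by (cases p) (auto simp: te_carrier te_mult te_zero)
lemma R_mult_zero_l[simp]: "p \<in> carrier R \<Longrightarrow> \<zero>\<^bsub>R\<^esub> \<otimes>\<^bsub>R\<^esub> p = \<zero>\<^bsub>R\<^esub>"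
  by (cases p) (auto simp: te_carrier te_mult te_zero)
lemma R_add_zero_r[simp]: "p \<in> carrier R \<Longrightarrow> p \<oplus>\<^bsub>R\<^esub> \<zero>\<^bsub>R\<^esub> = p"
  by (cases p) (auto simp: te_carrier te_add te_zero)
lemma R_add_zero_l[simp]: "p \<in> carrier R \<Longrightarrow> \<zero>\<^bsub>R\<^esub> \<oplus>\<^bsub>R\<^esub> p = p"
  by (cases p) (auto simp: te_carrier te_add te_zero)

inductive_set Yset :: "('a \<times> 'a set, 'm, 'z) module_scheme \<Rightarrow> 'm set \<Rightarrow> 'm set" for M S where
  Y0: "\<zero>\<^bsub>M\<^esub> \<in> Yset M S"
| Ystep: "i \<in> I \<Longrightarrow> m \<in> S \<Longrightarrow> y \<in> Yset M S \<Longrightarrow> ((i, I) \<odot>\<^bsub>M\<^esub> m) \<oplus>\<^bsub>M\<^esub> y \<in> Yset M S"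

lemma Y_mono: assumes "S \<subseteq> S'" shows "y \<in> Yset M S \<Longrightarrow> y \<in> Yset M S'"
  by (induction rule: Yset.induct) (use assms in \<open>auto intro: Yset.intros\<close>)

lemma Y_carrier_mod: assumes "module R M" "S \<subseteq> carrier M" shows "y \<in> Yset M S \<Longrightarrow> y \<in> carrier M"
proof (induction rule: Yset.induct)
  interpret M: module R M by fact
  case Y0 then show ?case by simp
next
  interpret M: module R M by fact
  case (Ystep i m y) then show ?case using assms(2) by auto
qed

lemma Y_map:
  assumes hom: "module_hom R M N \<phi>" and clos: "Yset M S \<subseteq> carrier M" "\<And>i m. i \<in> I \<Longrightarrow> m \<in> S \<Longrightarrow> (i, I) \<odot>\<^bsub>M\<^esub> m \<in> carrier M"
    and z: "\<phi> \<zero>\<^bsub>M\<^esub> = \<zero>\<^bsub>N\<^esub>" and S: "S \<subseteq> carrier M"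
  shows "y \<in> Yset M S \<Longrightarrow> \<phi> y \<in> Yset N (\<phi> ` S)"
proof (induction rule: Yset.induct)
  case Y0 then show ?case by (simp add: z Yset.Y0)
next
  case (Ystep i m y)
  have "\<phi> (((i, I) \<odot>\<^bsub>M\<^esub> m) \<oplus>\<^bsub>M\<^esub> y) = \<phi> ((i, I) \<odot>\<^bsub>M\<^esub> m) \<oplus>\<^bsub>N\<^esub> \<phi> y"
    using hom clos Ystep unfolding module_hom_def by blast
  also have "\<phi> ((i, I) \<odot>\<^bsub>M\<^esub> m) = (i, I) \<odot>\<^bsub>N\<^esub> \<phi> m"
    using hom Ystep S iI_carrier unfolding module_hom_def by blast
  finally show ?case using Ystep by (auto intro: Yset.Ystep)
qed

lemma hom_zero:
  assumes hom: "module_hom R M N \<phi>" and "module R M" and "\<And>u. u \<in> carrier N \<Longrightarrow> \<zero>\<^bsub>R\<^esub> \<odot>\<^bsub>N\<^esub> u = \<zero>\<^bsub>N\<^esub>"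
  shows "\<phi> \<zero>\<^bsub>M\<^esub> = \<zero>\<^bsub>N\<^esub>"
proof -
  interpret M: module R M by fact
  have "\<phi> \<zero>\<^bsub>M\<^esub> = \<phi> (\<zero>\<^bsub>R\<^esub> \<odot>\<^bsub>M\<^esub> \<zero>\<^bsub>M\<^esub>)" by simp
  also have "\<dots> = \<zero>\<^bsub>R\<^esub> \<odot>\<^bsub>N\<^esub> \<phi> \<zero>\<^bsub>M\<^esub>" using hom M.zero_closed R_zero_closed unfolding module_hom_def by blast
  also have "\<dots> = \<zero>\<^bsub>N\<^esub>" using assms(3) hom unfolding module_hom_def by (simp add: Pi_iff)
  finally show ?thesis .
qed

lemma F_carrier: "u \<in> carrier (free_module R X) \<longleftrightarrow>
   u \<in> X \<rightarrow> carrier R \<and> (\<forall>x. x \<notin> X \<longrightarrow> u x = \<zero>\<^bsub>R\<^esub>) \<and> finite {x. u x \<noteq> \<zero>\<^bsub>R\<^esub>}"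
  by (simp add: free_module_def)
lemma F_ops: "\<zero>\<^bsub>free_module R X\<^esub> = (\<lambda>x. \<zero>\<^bsub>R\<^esub>)"
   "u \<oplus>\<^bsub>free_module R X\<^esub> v = (\<lambda>x. u x \<oplus>\<^bsub>R\<^esub> v x)"
   "r \<odot>\<^bsub>free_module R X\<^esub> u = (\<lambda>x. r \<otimes>\<^bsub>R\<^esub> u x)"
  by (simp_all add: free_module_def)

lemma F_val: "u \<in> carrier (free_module R X) \<Longrightarrow> u x \<in> carrier R"
  unfolding F_carrier by (cases "x \<in> X") auto

lemma F_zero_closed: "\<zero>\<^bsub>free_module R X\<^esub> \<in> carrier (free_module R X)"
  by (simp add: F_carrier F_ops)

lemma F_add_closed: "u \<in> carrier (free_module R X) \<Longrightarrow> v \<in> carrier (free_module R X) \<Longrightarrow>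
    u \<oplus>\<^bsub>free_module R X\<^esub> v \<in> carrier (free_module R X)"
proof -
  assume u: "u \<in> carrier (free_module R X)" and v: "v \<in> carrier (free_module R X)"
  have "{x. u x \<oplus>\<^bsub>R\<^esub> v x \<noteq> \<zero>\<^bsub>R\<^esub>} \<subseteq> {x. u x \<noteq> \<zero>\<^bsub>R\<^esub>} \<union> {x. v x \<noteq> \<zero>\<^bsub>R\<^esub>}" by auto
  then show ?thesis using u v F_val[OF u] F_val[OF v] unfolding F_carrier F_ops by (auto intro: finite_subset)
qed

lemma F_smult_closed: "r \<in> carrier R \<Longrightarrow> u \<in> carrier (free_module R X) \<Longrightarrow>
    r \<odot>\<^bsub>free_module R X\<^esub> u \<in> carrier (free_module R X)"
proof -
  assume r: "r \<in> carrier R" and u: "u \<in> carrier (free_module R X)"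
  have "{x. r \<otimes>\<^bsub>R\<^esub> u x \<noteq> \<zero>\<^bsub>R\<^esub>} \<subseteq> {x. u x \<noteq> \<zero>\<^bsub>R\<^esub>}" using r by auto
  then show ?thesis using u r F_val[OF u] unfolding F_carrier F_ops by (auto intro: finite_subset)
qed

lemma F_Y_carrier: "y \<in> Yset (free_module R X) (carrier (free_module R X)) \<Longrightarrow> y \<in> carrier (free_module R X)"
  by (induction rule: Yset.induct) (auto intro: F_zero_closed F_add_closed F_smult_closed iI_carrier)

lemma F_Y_snd: "y \<in> Yset (free_module R X) (carrier (free_module R X)) \<Longrightarrow> snd (y x) = I"
proof (induction rule: Yset.induct)
  case Y0 then show ?case by (simp add: F_ops te_zero)
next
  case (Ystep i m y)
  have "m x \<in> carrier R" by (rule F_val[OF Ystep(2)])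
  moreover have "y x \<in> carrier R" by (rule F_val[OF F_Y_carrier[OF Ystep(3)]])
  ultimately show ?case using Ystep
    by (cases "m x"; cases "y x") (auto simp: F_ops te_mult te_add te_carrier)
qed

lemma I0[simp]: "\<zero>\<^bsub>A\<^esub> \<in> I" by simp
lemma I_sub: "i \<in> I \<Longrightarrow> i \<in> carrier A" using a_subset by blast

lemma F_Y_fin:
  assumes "finite S"
  shows "S \<subseteq> X \<Longrightarrow> (\<forall>x. fst (y x) \<in> I \<and> snd (y x) = I) \<Longrightarrow> (\<forall>x. x \<notin> S \<longrightarrow> y x = \<zero>\<^bsub>R\<^esub>)
     \<Longrightarrow> y \<in> Yset (free_module R X) (carrier (free_module R X))"
  using assms
proof (induction S arbitrary: y rule: finite_induct)
  case empty
  then have "y = \<zero>\<^bsub>free_module R X\<^esub>" by (auto simp: F_ops)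
  then show ?case by (simp add: Yset.Y0)
next
  case (insert s S)
  define y' where "y' = y(s := \<zero>\<^bsub>R\<^esub>)"
  have y'Y: "y' \<in> Yset (free_module R X) (carrier (free_module R X))"
    using insert by (intro insert.IH) (auto simp: y'_def te_zero)
  define \<delta> where "\<delta> = (\<lambda>x. if x = s then \<one>\<^bsub>R\<^esub> else \<zero>\<^bsub>R\<^esub>)"
  have "{x. \<delta> x \<noteq> \<zero>\<^bsub>R\<^esub>} \<subseteq> {s}" by (auto simp: \<delta>_def)
  then have dC: "\<delta> \<in> carrier (free_module R X)"
    using insert.prems(1) by (auto simp: F_carrier \<delta>_def te_one te_zero te_carrier intro: finite_subset)
  obtain i where i: "y s = (i, I)" "i \<in> I" using insert.prems(2) by (metis prod.collapse)
  have yx: "y x \<in> carrier R" for x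
    using insert.prems(2)[rule_format, of x] I_sub by (cases "y x") (auto simp: te_carrier)
  have "y = ((i, I) \<odot>\<^bsub>free_module R X\<^esub> \<delta>) \<oplus>\<^bsub>free_module R X\<^esub> y'"
  proof
    fix x
    show "y x = (((i, I) \<odot>\<^bsub>free_module R X\<^esub> \<delta>) \<oplus>\<^bsub>free_module R X\<^esub> y') x"
    proof (cases "x = s")
      case True
      then show ?thesis using i I_sub[OF i(2)]
        by (simp add: F_ops \<delta>_def y'_def te_one te_zero te_mult te_add)
    next
      case False
      have "(i, I) \<otimes>\<^bsub>R\<^esub> \<zero>\<^bsub>R\<^esub> = \<zero>\<^bsub>R\<^esub>" using i by simp
      then show ?thesis using False yx[of x] by (simp add: F_ops \<delta>_def y'_def)
    qed
  qed
  then show ?case using Yset.Ystep[OF i(2) dC y'Y] by simp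
qed

lemma Q_rep: "e \<in> carrier Q \<Longrightarrow> \<exists>a\<in>carrier A. I +>\<^bsub>A\<^esub> a = e"
  by (auto simp: FactRing_def A_RCOSETS_def')

lemma F_decomp:
  assumes u: "u \<in> carrier (free_module R X)" and fi: "\<forall>x. fst (u x) \<in> I"
  shows "\<exists>w\<in>carrier (free_module R X). \<exists>y\<in>Yset (free_module R X) (carrier (free_module R X)).
           u = (n0 \<odot>\<^bsub>free_module R X\<^esub> w) \<oplus>\<^bsub>free_module R X\<^esub> y"
proof -
  define rep where "rep e = (SOME a. a \<in> carrier A \<and> I +>\<^bsub>A\<^esub> a = e)" for e
  have rep: "rep e \<in> carrier A \<and> I +>\<^bsub>A\<^esub> rep e = e" if eQ: "e \<in> carrier Q" for e
  proof -
    obtain a where "a \<in> carrier A \<and> I +>\<^bsub>A\<^esub> a = e" using Q_rep[OF eQ] by blast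
    then show ?thesis unfolding rep_def by (rule someI)
  qed
  have ux: "u x \<in> carrier R" for x using F_val[OF u] .
  have uo: "x \<notin> X \<Longrightarrow> u x = \<zero>\<^bsub>R\<^esub>" for x using u by (simp add: F_carrier)
  have fin: "finite {x. u x \<noteq> \<zero>\<^bsub>R\<^esub>}" using u by (simp add: F_carrier)
  define w where "w = (\<lambda>x. if x \<in> X \<and> snd (u x) \<noteq> I then (rep (snd (u x)), I) else \<zero>\<^bsub>R\<^esub>)"
  define y where "y = (\<lambda>x. (fst (u x), I))"
  have "{x. w x \<noteq> \<zero>\<^bsub>R\<^esub>} \<subseteq> {x. u x \<noteq> \<zero>\<^bsub>R\<^esub>}" by (auto simp: w_def te_zero)
  then have f2: "finite {x. w x \<noteq> \<zero>\<^bsub>R\<^esub>}" using fin by (rule finite_subset)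
  have wc: "w x \<in> carrier R" for x
    using rep[of "snd (u x)"] ux[of x] by (cases "u x") (auto simp: w_def te_carrier te_zero)
  have "\<forall>x. x \<notin> X \<longrightarrow> w x = \<zero>\<^bsub>R\<^esub>" by (simp add: w_def)
  then have wC: "w \<in> carrier (free_module R X)"
    using f2 wc unfolding F_carrier by blast
  have yY: "y \<in> Yset (free_module R X) (carrier (free_module R X))"
  proof (rule F_Y_fin[OF fin])
    show "{x. u x \<noteq> \<zero>\<^bsub>R\<^esub>} \<subseteq> X" using uo by blast
    show "\<forall>x. fst (y x) \<in> I \<and> snd (y x) = I" using fi by (simp add: y_def)
    show "\<forall>x. x \<notin> {x. u x \<noteq> \<zero>\<^bsub>R\<^esub>} \<longrightarrow> y x = \<zero>\<^bsub>R\<^esub>" by (simp add: y_def te_zero)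
  qed
  have "u = (n0 \<odot>\<^bsub>free_module R X\<^esub> w) \<oplus>\<^bsub>free_module R X\<^esub> y"
  proof
    fix x
    obtain a e where ae: "u x = (a, e)" by (cases "u x")
    have a: "a \<in> carrier A" and e: "e \<in> carrier Q" using ux[of x] ae by (auto simp: te_carrier)
    show "u x = ((n0 \<odot>\<^bsub>free_module R X\<^esub> w) \<oplus>\<^bsub>free_module R X\<^esub> y) x"
    proof (cases "x \<in> X \<and> e \<noteq> I")
      case True
      then show ?thesis using rep[OF e] a e ae
        by (simp add: F_ops w_def y_def n0_mult te_add)
    next
      case False
      then have "e = I" using uo[of x] ae by (auto simp: te_zero)
      then show ?thesis using a ae by (auto simp: F_ops w_def y_def te_add te_zero n0_mult)
    qed
  qed
  then show ?thesis using wC yY by blast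
qed

definition Qinv :: "('a \<times> 'a set, 'm, 'z) module_scheme \<Rightarrow> 'm set \<Rightarrow> bool" where
  "Qinv M S \<longleftrightarrow> (\<exists>z\<in>S. n0 \<odot>\<^bsub>M\<^esub> z = \<zero>\<^bsub>M\<^esub> \<and> \<not> (\<exists>m\<in>S. \<exists>y\<in>Yset M S. z = (n0 \<odot>\<^bsub>M\<^esub> m) \<oplus>\<^bsub>M\<^esub> y))"

lemma proj_key:
  fixes P :: "('a \<times> 'a set, 'p) module"
  assumes pr: "projective R P" and x: "x \<in> carrier P" and nx: "n0 \<odot>\<^bsub>P\<^esub> x \<in> Yset P (carrier P)"
  shows "\<exists>w\<in>carrier P. \<exists>y\<in>Yset P (carrier P). x = (n0 \<odot>\<^bsub>P\<^esub> w) \<oplus>\<^bsub>P\<^esub> y"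
proof -
  have mP: "module R P" using pr by (simp add: projective_def)
  interpret M: module R P by fact
  obtain X :: "'p set" and f g where f: "module_hom R P (free_module R X) f"
    and g: "module_hom R (free_module R X) P g" and gf: "\<forall>x\<in>carrier P. g (f x) = x"
    using pr unfolding projective_def by blast
  let ?F = "free_module R X"
  have fc: "v \<in> carrier P \<Longrightarrow> f v \<in> carrier ?F" for v using f unfolding module_hom_def by blast
  have gc: "v \<in> carrier ?F \<Longrightarrow> g v \<in> carrier P" for v using g unfolding module_hom_def by blast
  have fx: "f x \<in> carrier ?F" using fc x .
  have f0: "f \<zero>\<^bsub>P\<^esub> = \<zero>\<^bsub>?F\<^esub>"
    by (rule hom_zero[OF f mP]) (auto simp: F_ops F_val)
  have clos: "Yset P (carrier P) \<subseteq> carrier P" using Y_carrier_mod[OF mP] by blast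
  have "f (n0 \<odot>\<^bsub>P\<^esub> x) \<in> Yset ?F (f ` carrier P)"
    by (rule Y_map[OF f clos _ f0 subset_refl nx]) (simp add: M.smult_closed I_sub)
  then have fY: "f (n0 \<odot>\<^bsub>P\<^esub> x) \<in> Yset ?F (carrier ?F)"
    by (rule Y_mono[rotated]) (use fc in blast)
  have "f (n0 \<odot>\<^bsub>P\<^esub> x) = n0 \<odot>\<^bsub>?F\<^esub> f x" using f x n0_carrier unfolding module_hom_def by blast
  then have sn: "snd (n0 \<otimes>\<^bsub>R\<^esub> f x z) = I" for z using F_Y_snd[OF fY, of z] by (simp add: F_ops)
  have fi: "\<forall>z. fst (f x z) \<in> I"
  proof
    fix z
    obtain a e where ae: "f x z = (a, e)" by (cases "f x z")
    have a: "a \<in> carrier A" and e: "e \<in> carrier Q" using F_val[OF fx, of z] ae by (auto simp: te_carrier)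
    have "I +>\<^bsub>A\<^esub> a = I" using sn[of z] ae n0_mult[OF a e] by simp
    then show "fst (f x z) \<in> I" using h_zero_iff[OF a] ae by simp
  qed
  obtain w y where w: "w \<in> carrier ?F" and y: "y \<in> Yset ?F (carrier ?F)"
    and eq: "f x = (n0 \<odot>\<^bsub>?F\<^esub> w) \<oplus>\<^bsub>?F\<^esub> y"
    using F_decomp[OF fx fi] by blast
  have nwC: "n0 \<odot>\<^bsub>?F\<^esub> w \<in> carrier ?F" by (rule F_smult_closed[OF n0_carrier w])
  have yC: "y \<in> carrier ?F" by (rule F_Y_carrier[OF y])
  have "x = g (f x)" using gf x by simp
  also have "\<dots> = g (n0 \<odot>\<^bsub>?F\<^esub> w) \<oplus>\<^bsub>P\<^esub> g y" using eq g nwC yC unfolding module_hom_def by simp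
  also have "g (n0 \<odot>\<^bsub>?F\<^esub> w) = n0 \<odot>\<^bsub>P\<^esub> g w" using g w n0_carrier unfolding module_hom_def by blast
  finally have xe: "x = n0 \<odot>\<^bsub>P\<^esub> g w \<oplus>\<^bsub>P\<^esub> g y" .
  have z0: "\<zero>\<^bsub>R\<^esub> \<odot>\<^bsub>?F\<^esub> \<zero>\<^bsub>?F\<^esub> = \<zero>\<^bsub>?F\<^esub>" by (simp add: F_ops)
  have g0: "g \<zero>\<^bsub>?F\<^esub> = \<zero>\<^bsub>P\<^esub>"
  proof -
    have "g \<zero>\<^bsub>?F\<^esub> = g (\<zero>\<^bsub>R\<^esub> \<odot>\<^bsub>?F\<^esub> \<zero>\<^bsub>?F\<^esub>)" by (simp only: z0)
    also have "\<dots> = \<zero>\<^bsub>R\<^esub> \<odot>\<^bsub>P\<^esub> g \<zero>\<^bsub>?F\<^esub>" using g F_zero_closed R_zero_closed unfolding module_hom_def by blast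
    also have "\<dots> = \<zero>\<^bsub>P\<^esub>" using gc[OF F_zero_closed] by simp
    finally show ?thesis .
  qed
  have "g y \<in> Yset P (g ` carrier ?F)"
    by (rule Y_map[OF g _ _ g0 subset_refl y]) (auto intro: F_Y_carrier F_smult_closed iI_carrier)
  then have gy: "g y \<in> Yset P (carrier P)"
    by (rule Y_mono[rotated]) (use gc in blast)
  show ?thesis using xe gy gc[OF w] by blast
qed

lemma shift:
  fixes P :: "('a \<times> 'a set, 'p) module" and N :: "('a \<times> 'a set, 'n, 'z) module_scheme"
  assumes pr: "projective R P" and hom: "module_hom R P N \<phi>" and T: "\<phi> ` carrier P = T"
    and Nr: "\<And>u. u \<in> carrier N \<Longrightarrow> u \<oplus>\<^bsub>N\<^esub> \<zero>\<^bsub>N\<^esub> = u"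
    and Nz: "\<And>u. u \<in> carrier N \<Longrightarrow> \<zero>\<^bsub>R\<^esub> \<odot>\<^bsub>N\<^esub> u = \<zero>\<^bsub>N\<^esub>"
    and q: "Qinv N T"
  shows "Qinv P {x \<in> carrier P. \<phi> x = \<zero>\<^bsub>N\<^esub>}"
proof -
  have mP: "module R P" using pr by (simp add: projective_def)
  interpret M: module R P by fact
  have hc: "v \<in> carrier P \<Longrightarrow> \<phi> v \<in> carrier N" for v using hom unfolding module_hom_def by blast
  have ha: "v \<in> carrier P \<Longrightarrow> v' \<in> carrier P \<Longrightarrow> \<phi> (v \<oplus>\<^bsub>P\<^esub> v') = \<phi> v \<oplus>\<^bsub>N\<^esub> \<phi> v'" for v v'
    using hom unfolding module_hom_def by blast
  have hs: "r \<in> carrier R \<Longrightarrow> v \<in> carrier P \<Longrightarrow> \<phi> (r \<odot>\<^bsub>P\<^esub> v) = r \<odot>\<^bsub>N\<^esub> \<phi> v" for r v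
    using hom unfolding module_hom_def by blast
  from q obtain z where zT: "z \<in> T" and nz0: "n0 \<odot>\<^bsub>N\<^esub> z = \<zero>\<^bsub>N\<^esub>"
    and nrep: "\<not> (\<exists>m\<in>T. \<exists>y\<in>Yset N T. z = (n0 \<odot>\<^bsub>N\<^esub> m) \<oplus>\<^bsub>N\<^esub> y)"
    unfolding Qinv_def by blast
  obtain x where x: "x \<in> carrier P" and xz: "\<phi> x = z" using zT T by blast
  let ?S = "{x \<in> carrier P. \<phi> x = \<zero>\<^bsub>N\<^esub>}"
  have nxC: "n0 \<odot>\<^bsub>P\<^esub> x \<in> carrier P" using x by simp
  have z'S: "n0 \<odot>\<^bsub>P\<^esub> x \<in> ?S" using nxC hs[OF n0_carrier x] xz nz0 by simp
  have nn: "n0 \<odot>\<^bsub>P\<^esub> (n0 \<odot>\<^bsub>P\<^esub> x) = \<zero>\<^bsub>P\<^esub>"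
    using M.smult_assoc1[OF n0_carrier n0_carrier x] n0n0 x by simp
  have "\<not> (\<exists>m\<in>?S. \<exists>y\<in>Yset P ?S. n0 \<odot>\<^bsub>P\<^esub> x = (n0 \<odot>\<^bsub>P\<^esub> m) \<oplus>\<^bsub>P\<^esub> y)"
  proof
    assume "\<exists>m\<in>?S. \<exists>y\<in>Yset P ?S. n0 \<odot>\<^bsub>P\<^esub> x = (n0 \<odot>\<^bsub>P\<^esub> m) \<oplus>\<^bsub>P\<^esub> y"
    then obtain m y where m: "m \<in> ?S" and y: "y \<in> Yset P ?S"
      and eq: "n0 \<odot>\<^bsub>P\<^esub> x = (n0 \<odot>\<^bsub>P\<^esub> m) \<oplus>\<^bsub>P\<^esub> y" by blast
    have mC: "m \<in> carrier P" using m by simp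
    have yC: "y \<in> carrier P" using Y_carrier_mod[OF mP _ y] by blast
    have xm: "x \<ominus>\<^bsub>P\<^esub> m \<in> carrier P" using x mC by simp
    have "n0 \<odot>\<^bsub>P\<^esub> (x \<ominus>\<^bsub>P\<^esub> m) = n0 \<odot>\<^bsub>P\<^esub> x \<ominus>\<^bsub>P\<^esub> n0 \<odot>\<^bsub>P\<^esub> m"
      using x mC by (simp add: a_minus_def M.smult_r_distr M.smult_r_minus)
    also have "\<dots> = y" using eq mC yC by (simp add: a_minus_def M.a_ac M.r_neg)
    finally have d: "n0 \<odot>\<^bsub>P\<^esub> (x \<ominus>\<^bsub>P\<^esub> m) = y" .
    have "y \<in> Yset P (carrier P)" by (rule Y_mono[OF _ y]) blast
    then obtain w y' where w: "w \<in> carrier P" and y': "y' \<in> Yset P (carrier P)"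
      and e2: "x \<ominus>\<^bsub>P\<^esub> m = (n0 \<odot>\<^bsub>P\<^esub> w) \<oplus>\<^bsub>P\<^esub> y'"
      using proj_key[OF pr xm] d by blast
    have y'C: "y' \<in> carrier P" using Y_carrier_mod[OF mP _ y'] by blast
    have xe: "x = (x \<ominus>\<^bsub>P\<^esub> m) \<oplus>\<^bsub>P\<^esub> m" using x mC by (simp add: a_minus_def M.a_assoc M.l_neg)
    have "z = \<phi> (x \<ominus>\<^bsub>P\<^esub> m) \<oplus>\<^bsub>N\<^esub> \<phi> m" using xz xe ha[OF xm mC] by simp
    also have "\<dots> = \<phi> (x \<ominus>\<^bsub>P\<^esub> m)" using m Nr[OF hc[OF xm]] by simp
    also have "\<dots> = \<phi> (n0 \<odot>\<^bsub>P\<^esub> w) \<oplus>\<^bsub>N\<^esub> \<phi> y'" using e2 ha w y'C by simp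
    also have "\<phi> (n0 \<odot>\<^bsub>P\<^esub> w) = n0 \<odot>\<^bsub>N\<^esub> \<phi> w" using hs[OF n0_carrier w] .
    finally have zz: "z = n0 \<odot>\<^bsub>N\<^esub> \<phi> w \<oplus>\<^bsub>N\<^esub> \<phi> y'" .
    have h0: "\<phi> \<zero>\<^bsub>P\<^esub> = \<zero>\<^bsub>N\<^esub>" by (rule hom_zero[OF hom mP Nz])
    have "\<phi> y' \<in> Yset N (\<phi> ` carrier P)"
      by (rule Y_map[OF hom _ _ h0 subset_refl y']) (use Y_carrier_mod[OF mP] in \<open>auto simp: I_sub\<close>)
    then have "\<phi> y' \<in> Yset N T" using T by simp
    moreover have "\<phi> w \<in> T" using T w by blast
    ultimately show False using nrep zz by blast
  qed
  then show ?thesis unfolding Qinv_def using z'S nn by blast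
qed

lemma im_simps: "carrier (ideal_module R J) = J" "\<zero>\<^bsub>ideal_module R J\<^esub> = \<zero>\<^bsub>R\<^esub>"
  "u \<oplus>\<^bsub>ideal_module R J\<^esub> v = u \<oplus>\<^bsub>R\<^esub> v" "r \<odot>\<^bsub>ideal_module R J\<^esub> v = r \<otimes>\<^bsub>R\<^esub> v"
  by (simp_all add: ideal_module_def)

lemma no_res:
  fixes P :: "nat \<Rightarrow> ('a \<times> 'a set, 'p) module"
  assumes prp: "I \<noteq> carrier A" and J: "J \<subseteq> I \<times> carrier Q" and n0J: "n0 \<in> J"
  shows "\<not> finite_proj_resolution R (ideal_module R J) n P d eps"
proof
  assume res: "finite_proj_resolution R (ideal_module R J) n P d eps"
  let ?M = "ideal_module R J"
  have Jc: "J \<subseteq> carrier R" using J by (auto simp: te_carrier dest: I_sub)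
  define ker where "ker i = {x \<in> carrier (P i). if i = 0 then eps x = \<zero>\<^bsub>?M\<^esub> else d i x = \<zero>\<^bsub>P (i - 1)\<^esub>}" for i
  have Ysnd: "y \<in> Yset ?M J \<Longrightarrow> y \<in> carrier R \<and> snd y = I" for y
  proof (induction rule: Yset.induct)
    case Y0 then show ?case by (simp add: im_simps te_zero)
  next
    case (Ystep i m y)
    obtain a e where m: "m = (a, e)" "a \<in> I" "e \<in> carrier Q" using Ystep J by (cases m) auto
    obtain b where yb: "y = (b, I)" "b \<in> carrier A" using Ystep by (cases y) (auto simp: te_carrier)
    show ?case using Ystep m yb I_sub[OF m(2)] I_sub[OF Ystep(1)] by (simp add: im_simps iI_mult te_add te_carrier)
  qed
  have QM: "Qinv ?M J"
    unfolding Qinv_def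
  proof (intro bexI[OF _ n0J] conjI)
    show "n0 \<odot>\<^bsub>?M\<^esub> n0 = \<zero>\<^bsub>?M\<^esub>" by (simp add: im_simps n0n0)
    show "\<not> (\<exists>m\<in>J. \<exists>y\<in>Yset ?M J. n0 = n0 \<odot>\<^bsub>?M\<^esub> m \<oplus>\<^bsub>?M\<^esub> y)"
    proof
      assume "\<exists>m\<in>J. \<exists>y\<in>Yset ?M J. n0 = n0 \<odot>\<^bsub>?M\<^esub> m \<oplus>\<^bsub>?M\<^esub> y"
      then obtain m y where m: "m \<in> J" and y: "y \<in> Yset ?M J" and eq: "n0 = n0 \<otimes>\<^bsub>R\<^esub> m \<oplus>\<^bsub>R\<^esub> y"
        by (auto simp: im_simps)
      obtain a e where me: "m = (a, e)" "a \<in> I" "e \<in> carrier Q" using m J by (cases m) auto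
      obtain b where yb: "y = (b, I)" "b \<in> carrier A" using Ysnd[OF y] by (cases y) (auto simp: te_carrier)
      have "snd n0 = I" using eq me yb I_sub[OF me(2)] by (simp add: n0_mult te_add)
      then show False using h1_ne[OF prp] by (simp add: n0_def)
    qed
  qed
  have all: "i \<le> n \<Longrightarrow> Qinv (P i) (ker i)" for i
  proof (induction i)
    case 0
    have pr: "projective R (P 0)" using res unfolding finite_proj_resolution_def by blast
    have hom: "module_hom R (P 0) ?M eps" using res unfolding finite_proj_resolution_def by blast
    have T: "eps ` carrier (P 0) = J" using res unfolding finite_proj_resolution_def by (simp add: im_simps)
    have "Qinv (P 0) {x \<in> carrier (P 0). eps x = \<zero>\<^bsub>?M\<^esub>}"
      by (rule shift[OF pr hom T]) (use Jc QM in \<open>auto simp: im_simps\<close>)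
    then show ?case by (simp add: ker_def)
  next
    case (Suc i)
    then have IH: "Qinv (P i) (ker i)" by simp
    have pr: "projective R (P (Suc i))" using res Suc.prems unfolding finite_proj_resolution_def by blast
    have mi: "module R (P i)" using res Suc.prems unfolding finite_proj_resolution_def projective_def by simp
    interpret Mi: module R "P i" by fact
    have hom: "module_hom R (P (Suc i)) (P i) (d (Suc i))"
      using res Suc.prems unfolding finite_proj_resolution_def by (metis diff_Suc_1 le_add1 plus_1_eq_Suc)
    have T: "d (Suc i) ` carrier (P (Suc i)) = ker i"
      using res Suc.prems unfolding finite_proj_resolution_def ker_def by (simp add: Suc_le_lessD)
    have "Qinv (P (Suc i)) {x \<in> carrier (P (Suc i)). d (Suc i) x = \<zero>\<^bsub>P i\<^esub>}"
      by (rule shift[OF pr hom T]) (use IH in auto)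
    then show ?case by (simp add: ker_def)
  qed
  have Qn: "Qinv (P n) (ker n)" using all by simp
  have kn: "ker n = {\<zero>\<^bsub>P n\<^esub>}" using res unfolding finite_proj_resolution_def ker_def by blast
  have mn: "module R (P n)" using res unfolding finite_proj_resolution_def projective_def by simp
  interpret Mn: module R "P n" by fact
  have "n0 \<odot>\<^bsub>P n\<^esub> \<zero>\<^bsub>P n\<^esub> \<oplus>\<^bsub>P n\<^esub> \<zero>\<^bsub>P n\<^esub> = \<zero>\<^bsub>P n\<^esub>" by simp
  then show False using Qn kn Yset.Y0[of "P n" "{\<zero>\<^bsub>P n\<^esub>}"] unfolding Qinv_def by force
qed

end

theorem lemma1p2:
  fixes A :: "'a ring" and I :: "'a set"
  assumes "cring A" and "ideal I A" and "I \<noteq> carrier A"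
  shows "\<not> (\<exists>n (P :: nat \<Rightarrow> ('a \<times> 'a set, 'p) module) d eps.
              finite_proj_resolution (triv_ext A I)
                (ideal_module (triv_ext A I) (I \<times> carrier (A Quot I))) n P d eps)
       \<and> \<not> (\<exists>n (P :: nat \<Rightarrow> ('a \<times> 'a set, 'p) module) d eps.
              finite_proj_resolution (triv_ext A I)
                (ideal_module (triv_ext A I) ({\<zero>\<^bsub>A\<^esub>} \<times> carrier (A Quot I))) n P d eps)"
proof -
  interpret TE I A unfolding TE_def using assms by blast
  have n0in: "TE.n0 I A \<in> I \<times> carrier (A Quot I)" "TE.n0 I A \<in> {\<zero>\<^bsub>A\<^esub>} \<times> carrier (A Quot I)"
    by (simp_all add: n0_def)
  have J2: "{\<zero>\<^bsub>A\<^esub>} \<times> carrier (A Quot I) \<subseteq> I \<times> carrier (A Quot I)" by auto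
  show ?thesis using no_res[OF assms(3) subset_refl n0in(1)] no_res[OF assms(3) J2 n0in(2)] by blast
qed

end
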